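(* Let $\mathbf L\in\mathbb R_+^{n\times k}$ and let $\boldsymbol\psi:\mathcal C\to\mathbb R_+^n$ be $\mathbf L$-calibrated. Then for every sequence $\{\mathbf z_m\}$ of points in $\mathcal S_\psi$ there exists $t\in[k]$ such that $\mathcal N^\psi(\{\mathbf z_m\})\subseteq\mathcal Q^{\mathbf L}_t$.
   Context: Notation: $[m]=\{1,\dots,m\}$; $\Delta_n=\{\mathbf p\in\mathbb R_+^n:\sum_i p_i=1\}$. A loss matrix $\mathbf L\in\mathbb R_+^{n\times k}$ has columns $\boldsymbol\ell_t$, $t\in[k]$. Standing assumption: for each $t\in[k]$ there is $\mathbf p\in\Delta_n$ with $\operatorname{argmin}_{t'}\mathbf p^\top\boldsymbol\ell_{t'}=\{t\}$. A surrogate loss is $\boldsymbol\psi:\mathcal C\to\mathbb R_+^n$ with $\mathcal C\subseteq\mathbb R^d$ convex; $\mathcal R_\psi=\boldsymbol\psi(\mathcal C)$, $\mathcal S_\psi=\operatorname{conv}(\mathcal R_\psi)$. $\boldsymbol\psi$ is $\mathbf L$-calibrated if there is $\mathrm{pred}:\mathcal C\to[k]$ such that for all $\mathbf p\in\Delta_n$: $\inf_{\mathbf u\in\mathcal C:\mathrm{pred}(\mathbf u)\notin\operatorname{argmin}_t\mathbf p^\top\boldsymbol\ell_t}\mathbf p^\top\boldsymbol\psi(\mathbf u)>\inf_{\mathbf u\in\mathcal C}\mathbf p^\top\boldsymbol\psi(\mathbf u)$. Trigger probability set: $\mathcal Q^{\mathbf L}_t=\{\mathbf p\in\Delta_n: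 t\in\operatorname{argmin}_{t'\in[k]}\mathbf p^\top\boldsymbol\ell_{t'}\}$. Positive normal set at a sequence $\{\mathbf z_m\}$ in $\mathcal S_\psi$: $\mathcal N^\psi(\{\mathbf z_m\})=\{\mathbf p\in\Delta_n:\lim_{m\to\infty}\mathbf p^\top\mathbf z_m\text{ exists and equals }\inf_{\mathbf z'\in\mathcal S_\psi}\mathbf p^\top\mathbf z'\}$. *)

theory Defs
  imports "HOL-Analysis.Analysis"
begin

text \<open>Vectors in R^n are modelled as real^'n for a finite index type 'n (so [n] = UNIV::'n set),
  and the label set [k] is a finite type 'k. A loss matrix is given by its columns
  L :: 'k => real^'n.\<close>

definition prob_simplex :: "(real^'n) set" where
  "prob_simplex = {p. (\<forall>i. 0 \<le> p $ i) \<and> (\<Sum>i\<in>UNIV. p $ i) = 1}"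

definition nonneg_vec :: "real^'n \<Rightarrow> bool" where
  "nonneg_vec v \<longleftrightarrow> (\<forall>i. 0 \<le> v $ i)"

definition loss_argmin :: "('k::finite \<Rightarrow> real^'n) \<Rightarrow> real^'n \<Rightarrow> 'k set" where
  "loss_argmin L p = {t. \<forall>t'. p \<bullet> L t \<le> p \<bullet> L t'}"

definition standing_assumption :: "('k::finite \<Rightarrow> real^'n) \<Rightarrow> bool" where
  "standing_assumption L \<longleftrightarrow> (\<forall>t. \<exists>p\<in>prob_simplex. loss_argmin L p = {t})"

definition L_calibrated ::
  "('k::finite \<Rightarrow> real^'n) \<Rightarrow> 'c set \<Rightarrow> ('c \<Rightarrow> real^'n) \<Rightarrow> bool" where
  "L_calibrated L C psi \<longleftrightarrow>
     (\<exists>pred :: 'c \<Rightarrow> 'k. \<forall>p\<in>prob_simplex.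
        ({u\<in>C. pred u \<notin> loss_argmin L p} \<noteq> {} \<longrightarrow>
         (INF u\<in>{u\<in>C. pred u \<notin> loss_argmin L p}. p \<bullet> psi u) > (INF u\<in>C. p \<bullet> psi u)))"

text \<open>Convention: an infimum over the empty set is +infinity, so the calibration inequality
  holds trivially when no u mispredicts; all infima involved are bounded below by 0.\<close>

definition trigger_set :: "('k::finite \<Rightarrow> real^'n) \<Rightarrow> 'k \<Rightarrow> (real^'n) set" where
  "trigger_set L t = {p\<in>prob_simplex. t \<in> loss_argmin L p}"

definition S_psi :: "'c set \<Rightarrow> ('c \<Rightarrow> real^'n) \<Rightarrow> (real^'n) set" where
  "S_psi C psi = convex hull (psi ` C)"

definition positive_normal_set ::
  "'c set \<Rightarrow> ('c \<Rightarrow> real^'n) \<Rightarrow> (nat \<Rightarrow> real^'n) \<Rightarrow> (real^'n) set" where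
  "positive_normal_set C psi z = {p\<in>prob_simplex.
      ((\<lambda>m. p \<bullet> z m) \<longlongrightarrow> (INF z'\<in>S_psi C psi. p \<bullet> z')) sequentially}"

end

theory Submission
  imports Defs
begin

lemma nonneg_inner:
  fixes p v :: "real^'n"
  assumes "\<forall>i. 0 \<le> p $ i" "\<forall>i. 0 \<le> v $ i"
  shows "0 \<le> p \<bullet> v"
  using assms unfolding inner_vec_def by (auto intro!: sum_nonneg)

theorem mainTheorem4:
  fixes L :: "'k::finite \<Rightarrow> real^'n"
    and C :: "'c::euclidean_space set"
    and psi :: "'c \<Rightarrow> real^'n"
    and z :: "nat \<Rightarrow> real^'n"
  assumes L_nonneg: "\<forall>t. nonneg_vec (L t)"
    and standing: "standing_assumption L"
    and C_convex: "convex C"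
    and psi_nonneg: "\<forall>u\<in>C. nonneg_vec (psi u)"
    and calibrated: "L_calibrated L C psi"
    and z_in: "\<forall>m. z m \<in> S_psi C psi"
  shows "\<exists>t. positive_normal_set C psi z \<subseteq> trigger_set L t"
proof -
  obtain pred :: "'c \<Rightarrow> 'k" where predP: "\<forall>p\<in>prob_simplex.
        ({u\<in>C. pred u \<notin> loss_argmin L p} \<noteq> {} \<longrightarrow>
         (INF u\<in>{u\<in>C. pred u \<notin> loss_argmin L p}. p \<bullet> psi u) > (INF u\<in>C. p \<bullet> psi u))"
    using calibrated unfolding L_calibrated_def by blast
  have "\<forall>m. \<exists>Sw. finite (fst Sw) \<and> fst Sw \<subseteq> psi ` C \<and> (\<forall>x\<in>fst Sw. 0 \<le> snd Sw x) \<and> sum (snd Sw) (fst Sw) = 1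
          \<and> sum (\<lambda>v. snd Sw v *\<^sub>R v) (fst Sw) = z m"
  proof
    fix m
    obtain S0 w0 where "finite S0 \<and> S0 \<subseteq> psi ` C \<and> (\<forall>x\<in>S0. 0 \<le> w0 x) \<and> sum w0 S0 = 1
          \<and> sum (\<lambda>v. w0 v *\<^sub>R v) S0 = z m"
    proof -
      have "z m \<in> convex hull (psi ` C)" using z_in unfolding S_psi_def by simp
      then have "\<exists>S0 w0. finite S0 \<and> S0 \<subseteq> psi ` C \<and> (\<forall>x\<in>S0. 0 \<le> w0 x) \<and> sum w0 S0 = 1
          \<and> sum (\<lambda>v. w0 v *\<^sub>R v) S0 = z m"
        by (subst (asm) convex_hull_explicit) (simp only: mem_Collect_eq)
      then show ?thesis using that by (elim exE) 
    qed
    then show "\<exists>Sw. finite (fst Sw) \<and> fst Sw \<subseteq> psi ` C \<and> (\<forall>x\<in>fst Sw. 0 \<le> snd Sw x) \<and> sum (snd Sw) (fst Sw) = 1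
          \<and> sum (\<lambda>v. snd Sw v *\<^sub>R v) (fst Sw) = z m"
      by (intro exI[of _ "(S0, w0)"]) simp
  qed
  then obtain f where f: "\<forall>m. finite (fst (f m)) \<and> fst (f m) \<subseteq> psi ` C \<and> (\<forall>x\<in>fst (f m). 0 \<le> snd (f m) x) \<and> sum (snd (f m)) (fst (f m)) = 1
          \<and> sum (\<lambda>v. snd (f m) v *\<^sub>R v) (fst (f m)) = z m"
    by (rule choice[THEN exE]) blast
  define S where "S m = fst (f m)" for m
  define w where "w m = snd (f m)" for m
  have Sw: "\<And>m. finite (S m)" "\<And>m. S m \<subseteq> psi ` C"
    "\<And>m x. x \<in> S m \<Longrightarrow> 0 \<le> w m x" "\<And>m. sum (w m) (S m) = 1"
    "\<And>m. sum (\<lambda>v. w m v *\<^sub>R v) (S m) = z m"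
    using f unfolding S_def w_def by auto
  define lab where "lab x = pred (inv_into C psi x)" for x
  define K where "K = real CARD('k)"
  have Kpos: "K > 0" unfolding K_def by simp
  define W where "W m t = sum (w m) {x\<in>S m. lab x = t}" for m t
  have Wsum: "sum (W m) UNIV = 1" for m
    unfolding W_def using sum.group[OF Sw(1)[of m] finite[of "UNIV::'k set"], of lab "w m"] Sw(4)[of m]
    by simp
  have "\<exists>t. W m t \<ge> 1 / K" for m
  proof (rule ccontr)
    assume "\<not> ?thesis"
    then have "\<forall>t\<in>UNIV. W m t < 1 / K" by (simp add: not_le)
    then have "sum (W m) UNIV < sum (\<lambda>_. 1/K) (UNIV::'k set)"
      by (intro sum_strict_mono) auto
    also have "\<dots> = 1" using Kpos unfolding K_def by simp
    finally show False using Wsum by simp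
  qed
  then obtain T where T: "\<And>m. W m (T m) \<ge> 1 / K" by metis
  obtain m0 where "\<not> finite {m\<in>UNIV. T m = T m0}"
    using pigeonhole_infinite[of "UNIV::nat set" T] by auto
  define t where "t = T m0"
  define I where "I = {m. T m = t}"
  have Iinf: "infinite I" using \<open>\<not> finite _\<close> unfolding I_def t_def by simp
  have WI: "m \<in> I \<Longrightarrow> W m t \<ge> 1 / K" for m using T unfolding I_def by auto
  show ?thesis
  proof (rule exI[of _ t], rule subsetI)
    fix p assume pN: "p \<in> positive_normal_set C psi z"
    then have psimp: "p \<in> prob_simplex" and
      lim: "((\<lambda>m. p \<bullet> z m) \<longlongrightarrow> (INF z'\<in>S_psi C psi. p \<bullet> z')) sequentially"
      unfolding positive_normal_set_def by auto
    have pnn: "\<forall>i. 0 \<le> p $ i" using psimp unfolding prob_simplex_def by auto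
    define HS where "HS = (INF z'\<in>S_psi C psi. p \<bullet> z')"
    have Snn: "S_psi C psi \<subseteq> {v. \<forall>i. 0 \<le> v $ i}"
      unfolding S_psi_def
    proof (rule hull_minimal)
      show "psi ` C \<subseteq> {v. \<forall>i. 0 \<le> v $ i}" using psi_nonneg unfolding nonneg_vec_def by auto
      show "convex {v::real^'n. \<forall>i. 0 \<le> v $ i}"
        unfolding convex_def by (auto intro!: add_nonneg_nonneg mult_nonneg_nonneg)
    qed
    have bddS: "bdd_below ((\<lambda>z'. p \<bullet> z') ` S_psi C psi)"
      using Snn pnn nonneg_inner by (intro bdd_belowI2[of _ 0]) blast
    have RS: "psi ` C \<subseteq> S_psi C psi" unfolding S_psi_def by (rule hull_subset)
    have HSle: "HS \<le> p \<bullet> x" if "x \<in> psi ` C" for x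
      unfolding HS_def using RS that bddS by (intro cINF_lower) auto
    have Cne: "C \<noteq> {}" using Sw(4)[of 0] Sw(2)[of 0] by auto
    have HSR: "HS \<le> (INF u\<in>C. p \<bullet> psi u)"
      using Cne HSle by (intro cINF_greatest) auto
    show "p \<in> trigger_set L t"
    proof (rule ccontr)
      assume nt: "p \<notin> trigger_set L t"
      then have tnot: "t \<notin> loss_argmin L p" using psimp unfolding trigger_set_def by auto
      define Mis where "Mis = {u\<in>C. pred u \<notin> loss_argmin L p}"
      obtain m1 where "m1 \<in> I" using Iinf by (metis finite.emptyI equals0I)
      have "1 / K > 0" using Kpos by simp
      then have "W m1 t > 0" using WI[OF \<open>m1 \<in> I\<close>] by linarith
      then have "{x\<in>S m1. lab x = t} \<noteq> {}" unfolding W_def by force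
      then obtain x1 where x1: "x1 \<in> S m1" "lab x1 = t" by blast
      have "inv_into C psi x1 \<in> Mis"
        using x1 Sw(2)[of m1] tnot unfolding Mis_def lab_def by (auto intro: inv_into_into)
      then have Misne: "Mis \<noteq> {}" by auto
      define IM where "IM = (INF u\<in>Mis. p \<bullet> psi u)"
      have IMgt: "IM > (INF u\<in>C. p \<bullet> psi u)"
        using predP psimp Misne unfolding IM_def Mis_def by auto
      define \<delta> where "\<delta> = IM - HS"
      have dpos: "\<delta> > 0" using IMgt HSR unfolding \<delta>_def by simp
      have bddM: "bdd_below ((\<lambda>u. p \<bullet> psi u) ` Mis)"
        using psi_nonneg pnn nonneg_inner unfolding Mis_def nonneg_vec_def
        by (intro bdd_belowI2[of _ 0]) (auto intro!: nonneg_inner)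
      have key: "p \<bullet> z m - HS \<ge> \<delta> / K" if "m \<in> I" for m
      proof -
        have "p \<bullet> z m = (\<Sum>x\<in>S m. w m x * (p \<bullet> x))"
          using Sw(5)[of m, symmetric] by (simp add: inner_sum_right)
        then have "p \<bullet> z m - HS = (\<Sum>x\<in>S m. w m x * (p \<bullet> x - HS))"
          using Sw(4)[of m] by (simp add: right_diff_distrib sum_subtractf sum_distrib_right[symmetric])
        also have "\<dots> \<ge> (\<Sum>x\<in>{x\<in>S m. lab x = t}. w m x * (p \<bullet> x - HS))"
          using Sw(1)[of m] Sw(2)[of m] Sw(3) HSle
          by (intro sum_mono2) (auto intro!: mult_nonneg_nonneg)
        moreover have "(\<Sum>x\<in>{x\<in>S m. lab x = t}. w m x * (p \<bullet> x - HS))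
            \<ge> (\<Sum>x\<in>{x\<in>S m. lab x = t}. w m x * \<delta>)"
        proof (rule sum_mono)
          fix x assume x: "x \<in> {x\<in>S m. lab x = t}"
          then have xC: "x \<in> psi ` C" using Sw(2) by auto
          have "inv_into C psi x \<in> Mis"
            using x xC tnot unfolding Mis_def lab_def by (auto intro: inv_into_into)
          then have "IM \<le> p \<bullet> psi (inv_into C psi x)"
            unfolding IM_def using bddM by (intro cINF_lower) auto
          also have "psi (inv_into C psi x) = x" using xC by (simp add: f_inv_into_f)
          finally have "\<delta> \<le> p \<bullet> x - HS" unfolding \<delta>_def by simp
          then show "w m x * \<delta> \<le> w m x * (p \<bullet> x - HS)"
            using Sw(3) x by (intro mult_left_mono) auto
        qed
        moreover have "(\<Sum>x\<in>{x\<in>S m. lab x = t}. w m x * \<delta>) = \<delta> * W m t"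
          unfolding W_def by (simp add: sum_distrib_left mult.commute)
        moreover have "\<delta> * W m t \<ge> \<delta> * (1/K)"
          using WI[OF that] dpos by (intro mult_left_mono) auto
        ultimately show ?thesis by simp
      qed
      have "\<forall>\<^sub>F m in sequentially. dist (p \<bullet> z m) HS < \<delta> / K"
        using lim dpos Kpos unfolding HS_def tendsto_iff by auto
      then obtain N where N: "\<And>m. m \<ge> N \<Longrightarrow> dist (p \<bullet> z m) HS < \<delta> / K"
        unfolding eventually_sequentially by auto
      obtain m where "m \<in> I" "m \<ge> N"
        using Iinf unfolding infinite_nat_iff_unbounded_le by auto
      with N key show False unfolding dist_real_def by fastforce
    qed
  qed
qed

end
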